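(* Fix $\zeta\in Z$, a pair of monotone decreasing kinetic functions $(k_c,k_e)$ with associated numbers $\tau_\ell^{sc}$ and $\tau_v^{sc}=k_c(\tau_\ell^{sc})$, and $\tau_R\in(\tau_v^{\min},\tau_v^{sc}]$. Let $\hat\tau\in(\tau_\ell^{\min},\tau_\ell^{sc}]$ be the unique element of $\mathcal A_\ell$ with $p'(\tau_R)=\frac{p(\tau_R)-p(\hat\tau)-\zeta}{\tau_R-\hat\tau}$. Then there exists a continuous monotone increasing function $g_s:[\hat\tau,\tau_\ell^{sc}]\to[\tau_R,\tau_v^{sc}]$ such that for all $\tau\in[\hat\tau,\tau_\ell^{sc}]$ $$p'(g_s(\tau))=\frac{p(g_s(\tau))-p(\tau)-\zeta}{g_s(\tau)-\tau},$$ or equivalently $c(g_s(\tau))=s_c(\tau,g_s(\tau))$.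
   Context: Thermodynamic setting. Fix real numbers $0<\tau_\ell^{\min}<\tau_\ell^{\max}<\tau_v^{\min}$ and $\zeta^{\min}<0<\zeta^{\max}$. Set $\mathcal A_\ell=(\tau_\ell^{\min},\tau_\ell^{\max})$, $\mathcal A_v=(\tau_v^{\min},\infty)$ and $Z=(\zeta^{\min},\zeta^{\max})$. Let $p\in C^2(\mathcal A_\ell\cup\mathcal A_v)$ and $\psi,\mu\in C^3(\mathcal A_\ell\cup\mathcal A_v)$ with $p=-\psi'$ and $\mu=\psi+p\tau$. Assume: (H1) $p'<0$; (H2) $p''>0$ on $\mathcal A_\ell\cup\mathcal A_v$; (H3) for every $\zeta\in Z$ there exist $\tau_\ell^{sat}(\zeta)\in\mathcal A_\ell$, $\tau_v^{sat}(\zeta)\in\mathcal A_v$ with $p(\tau_v^{sat})-p(\tau_\ell^{sat})=\zeta$, $\mu(\tau_v^{sat})=\mu(\tau_\ell^{sat})$; (H4) $p(\tau)\to\infty$ as $\tau\to\tau_\ell^{\min}$; (H5) $p'(\tau_\ell)<p'(\tau_v)$ for all $\tau_\ell\in\mathcal A_\ell,\tau_v\in\mathcal A_v$; (H6) $\int_{\tau_v^{\min}}^R c\,d\tau\to\infty$ as $R\to\infty$, where $c(\tau)=\sqrt{-p'(\tau)}$. For the fixed $\zeta$ write $\tau_\ell^{sat}=\tau_\ell^{sat}(\zeta)$, $\tau_v^{sat}=\tau_v^{sat}(\zeta)$. Speeds: $s_e(\tau_\ell,\tau_v)=-\sqrt{\frac{\zeta-p(\tau_v)+p(\tau_\ell)}{\tau_v-\tau_\ell}}$,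 $s_c(\tau_\ell,\tau_v)=+\sqrt{\frac{\zeta-p(\tau_v)+p(\tau_\ell)}{\tau_v-\tau_\ell}}$. Driving force: $f(\tau_\ell,\tau_v)=\psi(\tau_v)-\psi(\tau_\ell)+(\tau_v-\tau_\ell)\frac{p(\tau_\ell)+p(\tau_v)}2+\zeta\frac{\tau_\ell+\tau_v}2$. Pair of monotone decreasing kinetic functions: given numbers $\tau_\ell^{sc}\in(\tau_\ell^{\min},\tau_\ell^{sat})$, $\tau_v^{se}\in(\tau_v^{\min},\infty)$ and differentiable functions $k_c:[\tau_\ell^{sc},\tau_\ell^{sat}]\to\mathcal A_v$, $k_e:[\tau_v^{sat},\tau_v^{se}]\to\mathcal A_\ell$ such that $k_c'\le0$, $k_e'\le0$; $f(\tau_\ell,k_c(\tau_\ell))\ge0$ on $[\tau_\ell^{sc},\tau_\ell^{sat}]$ and $f(k_e(\tau_v),\tau_v)\le0$ on $[\tau_v^{sat},\tau_v^{se}]$; $k_c(\tau_\ell^{sat})=\tau_v^{sat}$, $k_c(\tau_\ell^{sc})=\tau_v^{sc}$ with $|s_c(\tau_\ell^{sc},\tau_v^{sc})|=c(\tau_v^{sc})$; $k_e(\tau_v^{sat})=\tau_\ell^{sat}$, $k_e(\tau_v^{se})=\tau_\ell^{se}$ with $|s_e(\tau_\ell^{se},\tau_v^{se})|=c(\tau_v^{se})$, and $k_e'(\tau_v^{se})=0$. *)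

theory Defs
  imports "HOL-Analysis.Analysis"
begin

definition Ck_on :: "nat \<Rightarrow> real set \<Rightarrow> (real \<Rightarrow> real) \<Rightarrow> bool" where
  "Ck_on k S f \<longleftrightarrow>
     (\<forall>j<k. \<forall>x\<in>S. ((deriv ^^ j) f) differentiable (at x)) \<and> continuous_on S ((deriv ^^ k) f)"

definition sound_speed :: "(real \<Rightarrow> real) \<Rightarrow> real \<Rightarrow> real" where
  "sound_speed p \<tau> = sqrt (- deriv p \<tau>)"

definition s_e :: "(real \<Rightarrow> real) \<Rightarrow> real \<Rightarrow> real \<Rightarrow> real \<Rightarrow> real" where
  "s_e p \<zeta> \<tau>l \<tau>v = - sqrt ((\<zeta> - p \<tau>v + p \<tau>l) / (\<tau>v - \<tau>l))"

definition s_c :: "(real \<Rightarrow> real) \<Rightarrow> real \<Rightarrow> real \<Rightarrow> real \<Rightarrow> real" where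
  "s_c p \<zeta> \<tau>l \<tau>v = sqrt ((\<zeta> - p \<tau>v + p \<tau>l) / (\<tau>v - \<tau>l))"

definition driving_force :: "(real \<Rightarrow> real) \<Rightarrow> (real \<Rightarrow> real) \<Rightarrow> real \<Rightarrow> real \<Rightarrow> real \<Rightarrow> real" where
  "driving_force \<psi> p \<zeta> \<tau>l \<tau>v =
     \<psi> \<tau>v - \<psi> \<tau>l + (\<tau>v - \<tau>l) * (p \<tau>l + p \<tau>v) / 2 + \<zeta> * (\<tau>l + \<tau>v) / 2"

end

theory Submission
  imports Defs
begin

theorem lemma3p6:
  fixes tl_min tl_max tv_min z_min z_max :: real
    and p \<psi> \<mu> :: "real \<Rightarrow> real"
    and \<zeta> tl_sat tv_sat :: real
    and tl_sc tv_sc tv_se tl_se :: real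
    and kc ke kc' ke' :: "real \<Rightarrow> real"
    and \<tau>R :: real
  defines "Al \<equiv> {tl_min<..<tl_max}"
      and "Av \<equiv> {tv_min<..}"
      and "Z \<equiv> {z_min<..<z_max}"
  assumes ord: "0 < tl_min" "tl_min < tl_max" "tl_max < tv_min"
      and zord: "z_min < 0" "0 < z_max"
      and reg_p: "Ck_on 2 (Al \<union> Av) p"
      and reg_psi: "Ck_on 3 (Al \<union> Av) \<psi>"
      and reg_mu: "Ck_on 3 (Al \<union> Av) \<mu>"
      and p_def: "\<forall>x\<in>Al \<union> Av. p x = - deriv \<psi> x"
      and mu_def: "\<forall>x\<in>Al \<union> Av. \<mu> x = \<psi> x + p x * x"
      and H1: "\<forall>x\<in>Al \<union> Av. deriv p x < 0"
      and H2: "\<forall>x\<in>Al \<union> Av. deriv (deriv p) x > 0"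
      and H3: "\<forall>z\<in>Z. \<exists>a\<in>Al. \<exists>b\<in>Av. p b - p a = z \<and> \<mu> b = \<mu> a"
      and H4: "filterlim p at_top (at_right tl_min)"
      and H5: "\<forall>a\<in>Al. \<forall>b\<in>Av. deriv p a < deriv p b"
      and H6: "((\<lambda>R. set_nn_integral lborel {tv_min<..R} (\<lambda>x. ennreal (sound_speed p x)))
                 \<longlongrightarrow> \<infinity>) at_top"
      and zeta: "\<zeta> \<in> Z"
      and sat: "tl_sat \<in> Al" "tv_sat \<in> Av" "p tv_sat - p tl_sat = \<zeta>" "\<mu> tv_sat = \<mu> tl_sat"
      \<comment> \<open>pair of monotone decreasing kinetic functions\<close>
      and sc_range: "tl_sc \<in> {tl_min<..<tl_sat}"
      and se_range: "tv_se \<in> {tv_min<..}" "tv_sat < tv_se"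
      and kc_deriv: "\<forall>x\<in>{tl_sc..tl_sat}. (kc has_real_derivative kc' x) (at x within {tl_sc..tl_sat})"
      and ke_deriv: "\<forall>x\<in>{tv_sat..tv_se}. (ke has_real_derivative ke' x) (at x within {tv_sat..tv_se})"
      and kc_range: "kc ` {tl_sc..tl_sat} \<subseteq> Av"
      and ke_range: "ke ` {tv_sat..tv_se} \<subseteq> Al"
      and kc_dec: "\<forall>x\<in>{tl_sc..tl_sat}. kc' x \<le> 0"
      and ke_dec: "\<forall>x\<in>{tv_sat..tv_se}. ke' x \<le> 0"
      and kc_f: "\<forall>x\<in>{tl_sc..tl_sat}. driving_force \<psi> p \<zeta> x (kc x) \<ge> 0"
      and ke_f: "\<forall>x\<in>{tv_sat..tv_se}. driving_force \<psi> p \<zeta> (ke x) x \<le> 0"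
      and kc_sat: "kc tl_sat = tv_sat"
      and kc_sc: "kc tl_sc = tv_sc" "\<bar>s_c p \<zeta> tl_sc tv_sc\<bar> = sound_speed p tv_sc"
      and ke_sat: "ke tv_sat = tl_sat"
      and ke_se: "ke tv_se = tl_se" "\<bar>s_e p \<zeta> tl_se tv_se\<bar> = sound_speed p tv_se"
      and ke'_se: "ke' tv_se = 0"
      \<comment> \<open>the right state\<close>
      and tauR: "\<tau>R \<in> {tv_min<..tv_sc}"
  shows "\<exists>\<tau>h. \<tau>h \<in> {tl_min<..tl_sc}
            \<and> deriv p \<tau>R = (p \<tau>R - p \<tau>h - \<zeta>) / (\<tau>R - \<tau>h)
            \<and> (\<forall>t\<in>Al. deriv p \<tau>R = (p \<tau>R - p t - \<zeta>) / (\<tau>R - t) \<longrightarrow> t = \<tau>h)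
            \<and> (\<exists>g. continuous_on {\<tau>h..tl_sc} g \<and> mono_on {\<tau>h..tl_sc} g
                   \<and> g ` {\<tau>h..tl_sc} \<subseteq> {\<tau>R..tv_sc}
                   \<and> (\<forall>t\<in>{\<tau>h..tl_sc}. deriv p (g t) = (p (g t) - p t - \<zeta>) / (g t - t)))"
proof -
  define P1 where "P1 = deriv p"
  define P2 where "P2 = deriv P1"
  have dp: "(p has_real_derivative P1 x) (at x)" if "x \<in> Al \<union> Av" for x
  proof -
    have "(0::nat) < 2" by simp
    then have "((deriv ^^ 0) p) differentiable (at x)" using reg_p that unfolding Ck_on_def by blast
    then show ?thesis unfolding P1_def by (simp add: DERIV_deriv_iff_real_differentiable)
  qed
  have dP1: "(P1 has_real_derivative P2 x) (at x)" if "x \<in> Al \<union> Av" for x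
  proof -
    have "(1::nat) < 2" by simp
    then have "((deriv ^^ 1) p) differentiable (at x)" using reg_p that unfolding Ck_on_def by blast
    then show ?thesis unfolding P2_def P1_def by (simp add: DERIV_deriv_iff_real_differentiable)
  qed
  have cp: "isCont p x" if "x \<in> Al \<union> Av" for x using dp[OF that] DERIV_isCont by blast
  have cP1: "isCont P1 x" if "x \<in> Al \<union> Av" for x using dP1[OF that] DERIV_isCont by blast
  have H1': "P1 x < 0" if "x \<in> Al \<union> Av" for x using H1 that unfolding P1_def by blast
  have H2': "P2 x > 0" if "x \<in> Al \<union> Av" for x using H2 that unfolding P2_def P1_def by blast
  have H5': "P1 a < P1 b" if "a \<in> Al" "b \<in> Av" for a b using H5 that unfolding P1_def by blast
  define F where "F = (\<lambda>t v. P1 v * (v - t) - p v + p t + \<zeta>)"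
  have Fdec: "F t2 v < F t1 v" if "v \<in> Av" "t1 < t2" "t1 \<in> Al" "t2 \<in> Al" for t1 t2 v
  proof -
    have "F t1 v > F t2 v"
    proof (rule DERIV_neg_imp_decreasing[OF \<open>t1 < t2\<close>])
      fix x assume x: "t1 \<le> x" "x \<le> t2"
      then have xA: "x \<in> Al" using that unfolding Al_def by auto
      have "((\<lambda>t. F t v) has_real_derivative (- P1 v + P1 x)) (at x)"
        unfolding F_def using dp[of x] xA
        by (auto intro!: derivative_eq_intros)
      moreover have "- P1 v + P1 x < 0" using H5'[OF xA \<open>v \<in> Av\<close>] by simp
      ultimately show "\<exists>y. ((\<lambda>t. F t v) has_real_derivative y) (at x) \<and> y < 0" by blast
    qed
    then show ?thesis by simp
  qed
  have Finc: "F t v1 < F t v2" if "t \<in> Al" "v1 < v2" "v1 \<in> Av" "v2 \<in> Av" for t v1 v2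
  proof (rule DERIV_pos_imp_increasing[OF \<open>v1 < v2\<close>])
    fix x assume x: "v1 \<le> x" "x \<le> v2"
    then have xA: "x \<in> Av" using that unfolding Av_def by auto
    have tx: "t < x" using xA \<open>t \<in> Al\<close> ord unfolding Al_def Av_def by auto
    have "((\<lambda>v. F t v) has_real_derivative (P2 x * (x - t))) (at x)"
      unfolding F_def using dp[of x] dP1[of x] xA
      by (auto intro!: derivative_eq_intros simp: algebra_simps)
    moreover have "P2 x * (x - t) > 0" using H2'[of x] xA tx by simp
    ultimately show "\<exists>y. ((\<lambda>v. F t v) has_real_derivative y) (at x) \<and> 0 < y" by blast
  qed
  have eqF: "P1 v = (p v - p t - \<zeta>) / (v - t) \<longleftrightarrow> F t v = 0" if "v \<noteq> t" for t v
    using that unfolding F_def by (auto simp: field_simps)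
  have tsc_Al: "tl_sc \<in> Al" using sc_range sat(1) unfolding Al_def by auto
  have sc_le: "tl_sc \<le> tl_sat" using sc_range by simp
  have tvsc_Av: "tv_sc \<in> Av" using kc_range kc_sc(1) sc_le by force
  have tR_Av: "\<tau>R \<in> Av" using tauR unfolding Av_def by simp
  have tR_le: "\<tau>R \<le> tv_sc" using tauR by simp
  have Al_lt_Av: "t < v" if "t \<in> Al" "v \<in> Av" for t v using that ord unfolding Al_def Av_def by auto
  have kc_mono: "tv_sat \<le> tv_sc"
  proof -
    have "\<exists>x\<in>{tl_sc..tl_sat}. kc tl_sat - kc tl_sc = (*) (kc' x) (tl_sat - tl_sc)"
      using mvt_very_simple[OF sc_le, of kc "\<lambda>x. (*) (kc' x)"] kc_deriv
      unfolding has_field_derivative_def by simp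
    then obtain x where x: "x \<in> {tl_sc..tl_sat}" "kc tl_sat - kc tl_sc = kc' x * (tl_sat - tl_sc)"
      by auto
    have "kc' x * (tl_sat - tl_sc) \<le> 0" using kc_dec x(1) sc_le by (simp add: mult_nonpos_nonneg)
    then show ?thesis using x kc_sat kc_sc(1) by simp
  qed
  have p_dec_l: "p tl_sat < p tl_sc"
  proof (rule DERIV_neg_imp_decreasing[of tl_sc tl_sat p])
    show "tl_sc < tl_sat" using sc_range by simp
    fix x assume "tl_sc \<le> x" "x \<le> tl_sat"
    then have "x \<in> Al" using tsc_Al sat(1) unfolding Al_def by auto
    then show "\<exists>y. (p has_real_derivative y) (at x) \<and> y < 0" using dp H1' by blast
  qed
  have p_dec_v: "p tv_sc \<le> p tv_sat"
  proof (cases "tv_sat = tv_sc")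
    case False
    have "p tv_sc < p tv_sat"
    proof (rule DERIV_neg_imp_decreasing[of tv_sat tv_sc p])
      show "tv_sat < tv_sc" using kc_mono False by simp
      fix x assume "tv_sat \<le> x" "x \<le> tv_sc"
      then have "x \<in> Av" using sat(2) unfolding Av_def by auto
      then show "\<exists>y. (p has_real_derivative y) (at x) \<and> y < 0" using dp H1' by blast
    qed
    then show ?thesis by simp
  qed simp
  have Apos: "\<zeta> - p tv_sc + p tl_sc > 0" using sat(3) p_dec_l p_dec_v by linarith
  have dpos: "tv_sc - tl_sc > 0" using Al_lt_Av[OF tsc_Al tvsc_Av] by simp
  have F_sc: "F tl_sc tv_sc = 0"
  proof -
    have q: "(\<zeta> - p tv_sc + p tl_sc) / (tv_sc - tl_sc) > 0" using Apos dpos by simp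
    have "sqrt ((\<zeta> - p tv_sc + p tl_sc) / (tv_sc - tl_sc)) = sqrt (- P1 tv_sc)"
      using kc_sc(2) q unfolding s_c_def sound_speed_def P1_def by simp
    then have "(\<zeta> - p tv_sc + p tl_sc) / (tv_sc - tl_sc) = - P1 tv_sc" by simp
    then show ?thesis using dpos unfolding F_def by (simp add: field_simps)
  qed
  have FR_sc: "F tl_sc \<tau>R \<le> 0"
  proof (cases "\<tau>R = tv_sc")
    case False
    then show ?thesis using Finc[OF tsc_Al _ tR_Av tvsc_Av] tR_le F_sc by simp
  qed (use F_sc in simp)
  obtain t0 where t0: "tl_min < t0" "t0 < tl_sc" "F t0 \<tau>R > 0"
  proof -
    define M where "M = - P1 \<tau>R * \<tau>R + p \<tau>R - \<zeta>"
    from H4 have "eventually (\<lambda>t. M + 1 \<le> p t) (at_right tl_min)" by (simp add: filterlim_at_top)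
    then obtain b where b: "b > tl_min" "\<forall>y>tl_min. y < b \<longrightarrow> M+1 \<le> p y"
      by (auto simp: eventually_at_right_field)
    define t0 where "t0 = min ((tl_min+b)/2) ((tl_min+tl_sc)/2)"
    have t0: "tl_min < t0" "t0 < b" "t0 < tl_sc" using b sc_range unfolding t0_def by (auto simp: min_def)
    have pt: "M + 1 \<le> p t0" using b t0 by blast
    have "P1 \<tau>R * t0 < 0" using H1'[of \<tau>R] tR_Av t0 ord by (simp add: mult_neg_pos)
    then have "F t0 \<tau>R > 0" using pt unfolding F_def M_def by (simp add: algebra_simps)
    then show ?thesis using that t0 by blast
  qed
  have contFt: "continuous_on {a..b} (\<lambda>t. F t v)" if "{a..b} \<subseteq> Al" for a b v
    apply (rule continuous_at_imp_continuous_on)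
    unfolding F_def using that cp by (auto intro!: continuous_intros)
  have contFv: "continuous_on {a..b} (\<lambda>v. F t v)" if "{a..b} \<subseteq> Av" for a b t
    apply (rule continuous_at_imp_continuous_on)
    unfolding F_def using that cp cP1 by (auto intro!: continuous_intros)
  have t0Al: "{t0..tl_sc} \<subseteq> Al" using t0 tsc_Al unfolding Al_def by auto
  obtain \<tau>h where th: "t0 \<le> \<tau>h" "\<tau>h \<le> tl_sc" "F \<tau>h \<tau>R = 0"
    using IVT2'[of "\<lambda>t. F t \<tau>R" tl_sc 0 t0] FR_sc t0 contFt[OF t0Al] by auto
  have thAl: "\<tau>h \<in> Al" using th t0Al by auto
  have uniq: "t = \<tau>h" if "t \<in> Al" "F t \<tau>R = 0" for t
  proof (rule linorder_cases[of t \<tau>h])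
    assume "t < \<tau>h" then show ?thesis using Fdec[OF tR_Av _ that(1) thAl] th that by simp
  next
    assume "\<tau>h < t" then show ?thesis using Fdec[OF tR_Av _ thAl that(1)] th that by simp
  qed
  define S where "S = {\<tau>h..tl_sc}"
  define T where "T = {\<tau>R..tv_sc}"
  have SAl: "S \<subseteq> Al" using th t0Al unfolding S_def by auto
  have TAv: "T \<subseteq> Av" using tR_Av unfolding T_def Av_def by auto
  have ex: "\<exists>v. v \<in> T \<and> F t v = 0" if "t \<in> S" for t
  proof -
    have tA: "t \<in> Al" using that SAl by auto
    have "F t \<tau>R \<le> 0"
    proof (cases "t = \<tau>h")
      case False then show ?thesis using Fdec[OF tR_Av _ thAl tA] th that unfolding S_def by simp
    qed (use th in simp)
    moreover have "F t tv_sc \<ge> 0"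
    proof (cases "t = tl_sc")
      case False then show ?thesis using Fdec[OF tvsc_Av _ tA tsc_Al] F_sc that unfolding S_def by simp
    qed (use F_sc in simp)
    ultimately show ?thesis
      using IVT'[of "\<lambda>v. F t v" \<tau>R 0 tv_sc] tR_le contFv[of \<tau>R tv_sc t] TAv unfolding T_def by auto
  qed
  define g where "g t = (SOME v. v \<in> T \<and> F t v = 0)" for t
  have g: "g t \<in> T \<and> F t (g t) = 0" if "t \<in> S" for t
    unfolding g_def using someI_ex[OF ex[OF that]] .
  have guniq: "v = g t" if "t \<in> S" "v \<in> T" "F t v = 0" for t v
  proof -
    have tA: "t \<in> Al" using that SAl by auto
    show ?thesis
    proof (rule linorder_cases[of v "g t"])
      assume "v < g t" then show ?thesis using Finc[OF tA _ , of v "g t"] g[OF that(1)] that TAv by auto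
    next
      assume "g t < v" then show ?thesis using Finc[OF tA _ , of "g t" v] g[OF that(1)] that TAv by auto
    qed
  qed
  have gmono: "mono_on S g"
  proof (rule mono_onI)
    fix t1 t2 assume t: "t1 \<in> S" "t2 \<in> S" "t1 \<le> t2"
    show "g t1 \<le> g t2"
    proof (rule ccontr)
      assume "\<not> g t1 \<le> g t2"
      then have "F t2 (g t2) < F t2 (g t1)"
        using Finc[of t2 "g t2" "g t1"] g[OF t(1)] g[OF t(2)] t SAl TAv by auto
      moreover have "F t2 (g t1) \<le> F t1 (g t1)"
      proof (cases "t1 = t2")
        case False then show ?thesis
          using Fdec[of "g t1" t1 t2] g[OF t(1)] t SAl TAv by force
      qed simp
      ultimately show False using g[OF t(1)] g[OF t(2)] by simp
    qed
  qed
  have gcont: "continuous_on S g"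
  proof (rule continuous_from_closed_graph[of T])
    show "compact T" unfolding T_def by simp
    show "g \<in> S \<rightarrow> T" using g by blast
    have eq: "(\<lambda>x. (x, g x)) ` S = {z \<in> S \<times> T. F (fst z) (snd z) = 0}"
    proof
      show "(\<lambda>x. (x, g x)) ` S \<subseteq> {z \<in> S \<times> T. F (fst z) (snd z) = 0}" using g by auto
      show "{z \<in> S \<times> T. F (fst z) (snd z) = 0} \<subseteq> (\<lambda>x. (x, g x)) ` S"
      proof
        fix z assume z: "z \<in> {z \<in> S \<times> T. F (fst z) (snd z) = 0}"
        then have "snd z = g (fst z)" using guniq by auto
        then have "z = (fst z, g (fst z))" by (metis prod.collapse)
        then show "z \<in> (\<lambda>x. (x, g x)) ` S" using z by auto
      qed
    qed
    have "continuous_on (S \<times> T) (\<lambda>z. F (fst z) (snd z))"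
    proof (rule continuous_at_imp_continuous_on, rule ballI)
      fix z assume z: "z \<in> S \<times> T"
      then have a: "fst z \<in> Al \<union> Av" "snd z \<in> Al \<union> Av" using SAl TAv by auto
      have f: "isCont fst z" using isCont_fst[OF continuous_ident, of z] by simp
      have s: "isCont snd z" using isCont_snd[OF continuous_ident, of z] by simp
      have c1: "isCont (\<lambda>z. p (fst z)) z" using isCont_o2[OF f cp[OF a(1)]] .
      have c2: "isCont (\<lambda>z. p (snd z)) z" using isCont_o2[OF s cp[OF a(2)]] .
      have c3: "isCont (\<lambda>z. P1 (snd z)) z" using isCont_o2[OF s cP1[OF a(2)]] .
      show "isCont (\<lambda>z. F (fst z) (snd z)) z"
        unfolding F_def using c1 c2 c3 by (intro continuous_intros) auto
    qed
    then show "closed ((\<lambda>x. (x, g x)) ` S)"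
      unfolding eq by (rule continuous_closed_preimage_constant) (simp add: S_def T_def closed_Times)
  qed
  show ?thesis
  proof (intro exI conjI)
    show "\<tau>h \<in> {tl_min<..tl_sc}" using th t0 by simp
    show "deriv p \<tau>R = (p \<tau>R - p \<tau>h - \<zeta>) / (\<tau>R - \<tau>h)"
      using eqF[of \<tau>R \<tau>h] th Al_lt_Av[OF thAl tR_Av] unfolding P1_def by simp
    show "\<forall>t\<in>Al. deriv p \<tau>R = (p \<tau>R - p t - \<zeta>) / (\<tau>R - t) \<longrightarrow> t = \<tau>h"
    proof (intro ballI impI)
      fix t assume tA: "t \<in> Al" and e: "deriv p \<tau>R = (p \<tau>R - p t - \<zeta>) / (\<tau>R - t)"
      have "\<tau>R \<noteq> t" using Al_lt_Av[OF tA tR_Av] by simp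
      then have "F t \<tau>R = 0" using eqF[of \<tau>R t] e unfolding P1_def by simp
      then show "t = \<tau>h" using uniq tA by simp
    qed
    show "continuous_on {\<tau>h..tl_sc} g" using gcont S_def by simp
    show "mono_on {\<tau>h..tl_sc} g" using gmono S_def by simp
    show "g ` {\<tau>h..tl_sc} \<subseteq> {\<tau>R..tv_sc}" using g S_def T_def by auto
    show "\<forall>t\<in>{\<tau>h..tl_sc}. deriv p (g t) = (p (g t) - p t - \<zeta>) / (g t - t)"
    proof
      fix t assume t: "t \<in> {\<tau>h..tl_sc}"
      then have "t < g t" using Al_lt_Av g SAl TAv S_def by blast
      then show "deriv p (g t) = (p (g t) - p t - \<zeta>) / (g t - t)"
        using eqF[of "g t" t] g t S_def unfolding P1_def by simp
    qed
  qed
qed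

end
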